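(* Let $X>0$, $n\ge 1$, and let $A_0,A_1:\mathbb{R}\to\mathbb{C}^{n\times n}$ be $X$-periodic with $A_0,A_1\in L^2_{\rm per}([0,X])$ (entrywise). For $\lambda\in\mathbb{C}$ define on $L^2_{\rm per}([0,X];\mathbb{C}^n)$ the operators $$K_1 U=\partial_x(\partial_x^2-1)^{-1}(A_1U),\qquad K_0U=(\partial_x^2-1)^{-1}\big((A_0+(1-\lambda)I)U\big),$$ initially on trigonometric polynomials. Then $K=K_1+K_0$ extends to a Hilbert–Schmidt operator on $L^2_{\rm per}([0,X];\mathbb{C}^n)$.
   Context: $L^2_{\rm per}([0,X];\mathbb{C}^n)$ denotes the Hilbert space of $X$-periodic $\mathbb{C}^n$-valued functions square-integrable on $[0,X]$. $(\partial_x^2-1)^{-1}$ and $\partial_x(\partial_x^2-1)^{-1}$ are the Fourier multipliers acting on the $k$-th Fourier mode $e^{2\pi i kx/X}$ by $(-(2\pi k/X)^2-1)^{-1}$ and $(2\pi i k/X)(-(2\pi k/X)^2-1)^{-1}$ respectively. An operator $A$ on a separable Hilbert space is Hilbert–Schmidt if $\sum_{j,k}|\langle Ae_j,e_k\rangle|^2<\infty$ for an orthonormal basis $\{e_j\}$. *)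

theory Defs
  imports "HOL-Analysis.Analysis"
begin

definition per_L2 :: "real \<Rightarrow> (real \<Rightarrow> complex) \<Rightarrow> bool" where
  "per_L2 X f \<longleftrightarrow> (\<forall>x. f (x + X) = f x) \<and>
     f \<in> borel_measurable (lebesgue_on {0..X}) \<and>
     integrable (lebesgue_on {0..X}) (\<lambda>x. (cmod (f x))\<^sup>2)"

definition l2_inner :: "real \<Rightarrow> (real \<Rightarrow> complex^'n) \<Rightarrow> (real \<Rightarrow> complex^'n) \<Rightarrow> complex" where
  "l2_inner X U V = (LINT x|lebesgue_on {0..X}. (\<Sum>i\<in>UNIV. U x $ i * cnj (V x $ i)))"

definition fourier_basis :: "real \<Rightarrow> int \<Rightarrow> 'n::finite \<Rightarrow> real \<Rightarrow> complex^'n" where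
  "fourier_basis X k a = (\<lambda>x. \<chi> i. if i = a then
      complex_of_real (1 / sqrt X) * exp (\<i> * complex_of_real (2 * pi * real_of_int k * x / X))
    else 0)"

text \<open>Symbols of the Fourier multipliers (d^2-1)^(-1) and d (d^2-1)^(-1).\<close>
definition inv_symbol :: "real \<Rightarrow> int \<Rightarrow> complex" where
  "inv_symbol X k = complex_of_real (1 / (- (2 * pi * real_of_int k / X)\<^sup>2 - 1))"

definition deriv_inv_symbol :: "real \<Rightarrow> int \<Rightarrow> complex" where
  "deriv_inv_symbol X k = \<i> * complex_of_real (2 * pi * real_of_int k / X) * inv_symbol X k"

text \<open>Coefficient <M F, e_{k,b}> of the Fourier multiplier M with symbol m applied to F:
  M acts on the k-th Fourier mode by multiplication with m k.\<close>
definition multiplier_coeff ::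
  "real \<Rightarrow> (int \<Rightarrow> complex) \<Rightarrow> (real \<Rightarrow> complex^'n::finite) \<Rightarrow> int \<Rightarrow> 'n \<Rightarrow> complex" where
  "multiplier_coeff X m F k b = m k * l2_inner X F (fourier_basis X k b)"

text \<open>Matrix entry <K e_{j,a}, e_{k,b}> of K = K_1 + K_0, where
  K_1 U = d (d^2-1)^(-1) (A_1 U) and K_0 U = (d^2-1)^(-1) ((A_0 + (1-lam) I) U).\<close>
definition K_entry ::
  "real \<Rightarrow> (real \<Rightarrow> complex^'n^'n) \<Rightarrow> (real \<Rightarrow> complex^'n^'n) \<Rightarrow> complex
     \<Rightarrow> int \<Rightarrow> 'n::finite \<Rightarrow> int \<Rightarrow> 'n \<Rightarrow> complex" where
  "K_entry X A0 A1 lam j a k b =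
     multiplier_coeff X (deriv_inv_symbol X) (\<lambda>x. A1 x *v fourier_basis X j a x) k b
   + multiplier_coeff X (inv_symbol X) (\<lambda>x. (A0 x + mat (1 - lam)) *v fourier_basis X j a x) k b"

end

theory Submission
  imports Defs
begin

definition ee :: "real \<Rightarrow> int \<Rightarrow> real \<Rightarrow> complex" where
  "ee X l x = cis (2 * pi * real_of_int l * x / X)"

lemma ee_mult: "ee X l x * ee X m x = ee X (l + m) x"
  unfolding ee_def by (simp add: cis_mult add_divide_distrib distrib_left distrib_right)

lemma ee_cnj: "cnj (ee X l x) = ee X (- l) x"
  unfolding ee_def by (simp add: cis_cnj)

lemma ee_norm [simp]: "cmod (ee X l x) = 1"
  unfolding ee_def by simp

lemma ee_cont: "continuous_on S (ee X l)"
proof -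
  have "ee X l = (\<lambda>x. cis ((2 * pi * real_of_int l / X) * x))"
    by (auto simp: ee_def fun_eq_iff)
  then show ?thesis
    by (simp only:) (rule continuous_on_cis, rule continuous_on_mult_left, rule continuous_on_id)
qed

lemma ee_meas: "ee X l \<in> borel_measurable (lebesgue_on {0..X})"
  by (rule continuous_imp_measurable_on_sets_lebesgue[OF ee_cont]) auto

lemma ee_integrable: "integrable (lebesgue_on {0..X}) (ee X l)"
  by (rule continuous_imp_integrable_real[OF ee_cont])

lemma ee_integral:
  assumes "X > 0"
  shows "integral\<^sup>L (lebesgue_on {0..X}) (ee X n) = (if n = 0 then complex_of_real X else 0)"
proof (cases "n = 0")
  case True
  have "integral {0..X} (ee X n) = complex_of_real X"
  proof -
    have "ee X 0 = (\<lambda>_. 1)" by (simp add: ee_def fun_eq_iff)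
    then show ?thesis using True assms by (simp add: scaleR_conv_of_real)
  qed
  then show ?thesis using True lebesgue_integral_eq_integral[OF ee_integrable] by simp
next
  case False
  define a where "a = 2 * pi * real_of_int n / X"
  have a0: "a \<noteq> 0" using False assms by (simp add: a_def)
  have ee_a: "ee X n x = cis (a * x)" for x by (simp add: ee_def a_def)
  define F where "F x = cis (a * x) / (\<i> * complex_of_real a)" for x
  have der: "(F has_vector_derivative ee X n x) (at x within {0..X})" for x
  proof -
    have "((\<lambda>x. cis (a * x)) has_derivative (\<lambda>t. (a * t) *\<^sub>R (\<i> * cis (a * x)))) (at x within {0..X})"
      by (auto intro!: derivative_eq_intros)
    then have "((\<lambda>x. cis (a * x)) has_vector_derivative (\<i> * complex_of_real a * cis (a * x))) (at x within {0..X})"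
      unfolding has_vector_derivative_def
      by (rule has_derivative_eq_rhs) (auto simp: fun_eq_iff scaleR_conv_of_real algebra_simps)
    then have "(F has_vector_derivative (\<i> * complex_of_real a * cis (a * x)) / (\<i> * complex_of_real a)) (at x within {0..X})"
      unfolding F_def by (intro derivative_intros)
    then show ?thesis using a0 by (simp add: ee_a)
  qed
  have "(ee X n has_integral F X - F 0) {0..X}"
    by (rule fundamental_theorem_of_calculus) (use assms der in auto)
  moreover have "F X - F 0 = 0"
  proof -
    have "cis (a * X) = 1" unfolding a_def using assms
      by (simp add: cis_multiple_2pi)
    then show ?thesis by (simp add: F_def)
  qed
  ultimately have "integral {0..X} (ee X n) = 0" by (simp add: integral_unique)
  then show ?thesis using False lebesgue_integral_eq_integral[OF ee_integrable] by simp
qed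
definition L2c :: "real \<Rightarrow> (real \<Rightarrow> complex) \<Rightarrow> bool" where
  "L2c X f \<longleftrightarrow> f \<in> borel_measurable (lebesgue_on {0..X}) \<and>
     integrable (lebesgue_on {0..X}) (\<lambda>x. (cmod (f x))\<^sup>2)"

lemma fin_meas: "finite_measure (lebesgue_on {0..X::real})"
  by (rule finite_measure_lebesgue_on) auto

lemma le_one_plus_sq: "0 \<le> (t::real) \<Longrightarrow> t \<le> 1 + t\<^sup>2"
proof -
  assume "0 \<le> t"
  have "0 \<le> (t - 1)\<^sup>2" by simp
  then show ?thesis using \<open>0 \<le> t\<close> by (simp add: power2_eq_square algebra_simps)
qed

lemma L2c_integrable:
  assumes "L2c X f" shows "integrable (lebesgue_on {0..X}) f"
proof -
  interpret finite_measure "lebesgue_on {0..X}" by (rule fin_meas)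
  have "integrable (lebesgue_on {0..X}) (\<lambda>x. 1 + (cmod (f x))\<^sup>2)"
    using assms unfolding L2c_def by (intro Bochner_Integration.integrable_add) auto
  then show ?thesis
  proof (rule Bochner_Integration.integrable_bound)
    show "f \<in> borel_measurable (lebesgue_on {0..X})" using assms by (simp add: L2c_def)
    show "AE x in lebesgue_on {0..X}. norm (f x) \<le> norm (1 + (cmod (f x))\<^sup>2)"
      using le_one_plus_sq[of "cmod (f _)"] by auto
  qed
qed

lemma L2c_mult_ee:
  assumes "L2c X f" shows "integrable (lebesgue_on {0..X}) (\<lambda>x. f x * ee X l x)"
  using L2c_integrable[OF assms]
proof (rule Bochner_Integration.integrable_bound)
  show "(\<lambda>x. f x * ee X l x) \<in> borel_measurable (lebesgue_on {0..X})"
    using assms ee_meas unfolding L2c_def by (intro borel_measurable_times) auto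
  show "AE x in lebesgue_on {0..X}. norm (f x * ee X l x) \<le> norm (f x)"
    by (simp add: norm_mult)
qed

definition FC :: "real \<Rightarrow> (real \<Rightarrow> complex) \<Rightarrow> int \<Rightarrow> complex" where
  "FC X f l = integral\<^sup>L (lebesgue_on {0..X}) (\<lambda>x. f x * ee X l x)"

lemma normsq_diff: "(cmod (a - b))\<^sup>2 = (cmod a)\<^sup>2 - 2 * Re (a * cnj b) + Re (b * cnj b)"
  by (simp only: cmod_power2) (simp add: power2_eq_square algebra_simps)

lemma mult_cnj_sq: "z * cnj z = (complex_of_real (cmod z))\<^sup>2"
  using complex_norm_square[of z] by simp

lemma cnj_mult_sq: "cnj z * z = (complex_of_real (cmod z))\<^sup>2"
  using complex_norm_square[of z] by (simp add: mult.commute)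

lemma int_term: "integrable (lebesgue_on {0..X}) (\<lambda>x. k * ee X n x)"
  by (intro Bochner_Integration.integrable_mult_right ee_integrable)

lemma bessel_finite:
  assumes X: "X > 0" and f: "L2c X f" and L: "finite L"
  shows "(\<Sum>l\<in>L. (cmod (FC X f l))\<^sup>2) \<le> X * integral\<^sup>L (lebesgue_on {0..X}) (\<lambda>x. (cmod (f x))\<^sup>2)"
proof -
  let ?M = "lebesgue_on {0..X}"
  define c where "c l = FC X f l" for l
  define g where "g x = (\<Sum>l\<in>L. c l * ee X (-l) x) / complex_of_real X" for x
  define S where "S = (\<Sum>l\<in>L. (cmod (c l))\<^sup>2)"
  have intfe: "integrable ?M (\<lambda>x. f x * ee X l x)" for l using L2c_mult_ee[OF f] .
  have fg: "f x * cnj (g x) = (\<Sum>l\<in>L. cnj (c l) * (f x * ee X l x)) / complex_of_real X" for x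
    by (simp add: g_def sum_distrib_left ee_cnj mult_ac)
  have int_fg: "integrable ?M (\<lambda>x. f x * cnj (g x))"
    unfolding fg by (intro Bochner_Integration.integrable_divide_zero Bochner_Integration.integrable_sum Bochner_Integration.integrable_mult_right intfe)
  have I_fg: "integral\<^sup>L ?M (\<lambda>x. f x * cnj (g x)) = complex_of_real (S / X)"
  proof -
    have "integral\<^sup>L ?M (\<lambda>x. f x * cnj (g x)) = (\<Sum>l\<in>L. cnj (c l) * c l) / complex_of_real X"
      unfolding fg integral_divide_zero by (subst Bochner_Integration.integral_sum) (auto simp: intfe c_def FC_def)
    also have "\<dots> = complex_of_real (S / X)"
    proof -
      have "(\<Sum>l\<in>L. cnj (c l) * c l) = complex_of_real S"
        unfolding S_def of_real_sum by (rule sum.cong) (simp_all add: cnj_mult_sq)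
      then show ?thesis by simp
    qed
    finally show ?thesis .
  qed
  have gg: "g x * cnj (g x) = (\<Sum>l\<in>L. \<Sum>m\<in>L. c l * cnj (c m) * ee X (m - l) x) / complex_of_real (X^2)" for x
  proof -
    have eem: "ee X (m - l) x = ee X (-l) x * ee X m x" for m l by (simp add: ee_mult)
    have "g x * cnj (g x) = (\<Sum>l\<in>L. c l * ee X (-l) x) * (\<Sum>m\<in>L. cnj (c m) * ee X m x) / complex_of_real (X^2)"
      by (simp add: g_def ee_cnj power2_eq_square)
    also have "\<dots> = (\<Sum>l\<in>L. \<Sum>m\<in>L. c l * cnj (c m) * ee X (m - l) x) / complex_of_real (X^2)"
      by (simp add: sum_product eem mult_ac)
    finally show ?thesis .
  qed
  have int_gg: "integrable ?M (\<lambda>x. g x * cnj (g x))"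
    unfolding gg by (intro Bochner_Integration.integrable_divide_zero Bochner_Integration.integrable_sum int_term)
  have I_gg: "integral\<^sup>L ?M (\<lambda>x. g x * cnj (g x)) = complex_of_real (S / X)"
  proof -
    have "integral\<^sup>L ?M (\<lambda>x. g x * cnj (g x)) =
        (\<Sum>l\<in>L. \<Sum>m\<in>L. c l * cnj (c m) * integral\<^sup>L ?M (ee X (m - l))) / complex_of_real (X^2)"
    proof -
      have inner: "integral\<^sup>L ?M (\<lambda>x. \<Sum>m\<in>L. c l * cnj (c m) * ee X (m - l) x) =
          (\<Sum>m\<in>L. c l * cnj (c m) * integral\<^sup>L ?M (ee X (m - l)))" for l
        by (subst Bochner_Integration.integral_sum) (auto simp: int_term)
      show ?thesis
        unfolding gg integral_divide_zero
        by (subst Bochner_Integration.integral_sum)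
           (auto intro!: Bochner_Integration.integrable_sum int_term simp: inner)
    qed
    also have "\<dots> = (\<Sum>l\<in>L. c l * cnj (c l) * complex_of_real X) / complex_of_real (X^2)"
      by (simp add: ee_integral[OF X] if_distrib L cong: if_cong sum.cong)
    also have "\<dots> = complex_of_real (S / X)"
    proof -
      have "(\<Sum>l\<in>L. c l * cnj (c l) * complex_of_real X) = complex_of_real S * complex_of_real X"
        unfolding S_def of_real_sum sum_distrib_right by (rule sum.cong) (simp_all add: mult_cnj_sq)
      then show ?thesis using X by (simp add: power2_eq_square)
    qed
    finally show ?thesis .
  qed
  have i1: "integrable ?M (\<lambda>x. (cmod (f x))\<^sup>2)" using f by (simp add: L2c_def)
  have i2: "integrable ?M (\<lambda>x. 2 * Re (f x * cnj (g x)))"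
    by (intro Bochner_Integration.integrable_mult_right integrable_Re int_fg)
  have i3: "integrable ?M (\<lambda>x. Re (g x * cnj (g x)))"
    by (intro integrable_Re int_gg)
  have "0 \<le> integral\<^sup>L ?M (\<lambda>x. (cmod (f x - g x))\<^sup>2)"
    by (rule integral_nonneg_AE) auto
  also have "\<dots> = integral\<^sup>L ?M (\<lambda>x. (cmod (f x))\<^sup>2) - 2 * Re (integral\<^sup>L ?M (\<lambda>x. f x * cnj (g x)))
      + Re (integral\<^sup>L ?M (\<lambda>x. g x * cnj (g x)))"
    unfolding normsq_diff
    by (simp only: Bochner_Integration.integral_add[OF Bochner_Integration.integrable_diff[OF i1 i2] i3]
        Bochner_Integration.integral_diff[OF i1 i2] integral_mult_right_zero
        integral_Re[OF int_fg] integral_Re[OF int_gg])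
  also have "\<dots> = integral\<^sup>L ?M (\<lambda>x. (cmod (f x))\<^sup>2) - S / X"
    unfolding I_fg I_gg by simp
  finally have "S / X \<le> integral\<^sup>L ?M (\<lambda>x. (cmod (f x))\<^sup>2)" by simp
  then show ?thesis using X by (simp add: S_def c_def field_simps)
qed


lemma bessel_summable:
  assumes "X > 0" "L2c X f"
  shows "(\<lambda>l. (cmod (FC X f l))\<^sup>2) summable_on UNIV"
  by (rule nonneg_bdd_above_summable_on) (auto intro!: bdd_aboveI2 bessel_finite[OF assms])

definition ww :: "real \<Rightarrow> int \<Rightarrow> real" where
  "ww X k = 1 / (1 + (2 * pi * real_of_int k / X)\<^sup>2)"

lemma ww_summable:
  assumes X: "X > 0"
  shows "ww X summable_on UNIV"
proof -
  define q where "q n = ww X (int n)" for n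
  have qnn: "0 \<le> q n" for n by (simp add: q_def ww_def)
  have "summable q"
  proof (rule summable_comparison_test'[of "\<lambda>n. (X / (2*pi))\<^sup>2 * inverse (real n ^ 2)" 1])
    show "summable (\<lambda>n. (X / (2*pi))\<^sup>2 * inverse (real n ^ 2))"
      by (intro summable_mult inverse_power_summable) simp
    fix n :: nat assume n: "1 \<le> n"
    have t: "0 < 2 * pi * real n / X" using X n by simp
    have "q n \<le> 1 / (2 * pi * real n / X)\<^sup>2" unfolding q_def ww_def
      by (rule divide_left_mono) (use t n in \<open>auto intro!: mult_pos_pos add_pos_nonneg\<close>)
    also have "\<dots> = (X / (2*pi))\<^sup>2 * inverse (real n ^ 2)"
      using X n by (simp add: field_simps power2_eq_square)
    finally show "norm (q n) \<le> (X / (2*pi))\<^sup>2 * inverse (real n ^ 2)" using qnn by simp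
  qed
  then have s1: "q summable_on UNIV" using summable_on_UNIV_nonneg_real_iff qnn by blast
  have s2: "ww X summable_on range int"
    by (subst summable_on_reindex) (use s1 in \<open>auto simp: q_def[abs_def] o_def\<close>)
  have s3: "ww X summable_on range (\<lambda>n. - int n)"
  proof (subst summable_on_reindex)
    show "inj_on (\<lambda>n. - int n) UNIV" by (auto simp: inj_on_def)
    have "(ww X \<circ> (\<lambda>n. - int n)) = q" by (auto simp: q_def ww_def fun_eq_iff power2_eq_square)
    then show "(ww X \<circ> (\<lambda>n. - int n)) summable_on UNIV" using s1 by simp
  qed
  have "range int \<union> range (\<lambda>n. - int n) = (UNIV :: int set)"
  proof -
    have "k \<in> range int \<union> range (\<lambda>n. - int n)" for k :: int
    proof (cases "k \<ge> 0")
      case True then have "k = int (nat k)" by simp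
      then show ?thesis by blast
    next
      case False then have "k = - int (nat (- k))" by simp
      then show ?thesis by blast
    qed
    then show ?thesis by blast
  qed
  then show ?thesis using summable_on_union[OF s2 s3] by simp
qed

lemma sym_aux1: "(1 / (- (t::real)\<^sup>2 - 1))\<^sup>2 \<le> 1 / (1 + t\<^sup>2)"
proof -
  have p: "1 \<le> 1 + t\<^sup>2" by simp
  have p2: "0 < 1 + t\<^sup>2" by (simp add: add_pos_nonneg)
  have "(1 / (- t\<^sup>2 - 1))\<^sup>2 = 1 / (1 + t\<^sup>2) * (1 / (1 + t\<^sup>2))"
    by (simp add: power2_eq_square field_simps)
  also have "\<dots> \<le> 1 / (1 + t\<^sup>2) * 1"
    using p p2 by (intro mult_left_mono) (auto simp: divide_le_eq_1)
  finally show ?thesis by simp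
qed

lemma sym_aux2: "t\<^sup>2 * (1 / (- (t::real)\<^sup>2 - 1))\<^sup>2 \<le> 1 / (1 + t\<^sup>2)"
proof -
  have p: "0 < 1 + t\<^sup>2" by (simp add: add_pos_nonneg)
  have "t\<^sup>2 * (1 / (- t\<^sup>2 - 1))\<^sup>2 = t\<^sup>2 / (1 + t\<^sup>2) * (1 / (1 + t\<^sup>2))"
    by (simp add: power2_eq_square field_simps)
  also have "\<dots> \<le> 1 * (1 / (1 + t\<^sup>2))"
    using p by (intro mult_right_mono) auto
  finally show ?thesis by simp
qed

lemma inv_symbol_bound: "(cmod (inv_symbol X k))\<^sup>2 \<le> ww X k"
  unfolding inv_symbol_def ww_def norm_of_real power2_abs by (rule sym_aux1)

lemma deriv_symbol_bound: "(cmod (deriv_inv_symbol X k))\<^sup>2 \<le> ww X k"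
  unfolding deriv_inv_symbol_def inv_symbol_def ww_def norm_mult norm_of_real power_mult_distrib power2_abs
  using sym_aux2 by simp


lemma fb_ee: "fourier_basis X k a x = (\<chi> i. if i = a then complex_of_real (1 / sqrt X) * ee X k x else 0)"
  unfolding fourier_basis_def ee_def cis_conv_exp by simp

lemma inner_formula:
  fixes B :: "real \<Rightarrow> complex^'n::finite^'n"
  assumes X: "X > 0"
  shows "l2_inner X (\<lambda>x. B x *v fourier_basis X j a x) (fourier_basis X k b)
       = FC X (\<lambda>x. B x $ b $ a) (j - k) / complex_of_real X"
proof -
  have cc: "complex_of_real (1 / sqrt X) * complex_of_real (1 / sqrt X) = 1 / complex_of_real X"
  proof -
    have "(1 / sqrt X) * (1 / sqrt X) = 1 / X" using X by (simp add: field_simps)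
    then show ?thesis by (metis of_real_mult of_real_divide of_real_1)
  qed
  have eek: "ee X j x * cnj (ee X k x) = ee X (j - k) x" for x
    by (simp add: ee_cnj ee_mult)
  have pt: "(\<Sum>i\<in>UNIV. (B x *v fourier_basis X j a x) $ i * cnj (fourier_basis X k b x $ i))
      = B x $ b $ a * ee X (j - k) x / complex_of_real X" for x
  proof -
    have "(\<Sum>i\<in>UNIV. (B x *v fourier_basis X j a x) $ i * cnj (fourier_basis X k b x $ i))
        = (B x *v fourier_basis X j a x) $ b * cnj (complex_of_real (1 / sqrt X) * ee X k x)"
      by (simp add: fb_ee if_distrib cong: if_cong)
    also have "(B x *v fourier_basis X j a x) $ b = B x $ b $ a * (complex_of_real (1 / sqrt X) * ee X j x)"
      by (simp add: fb_ee matrix_vector_mult_def if_distrib cong: if_cong)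
    also have "B x $ b $ a * (complex_of_real (1 / sqrt X) * ee X j x) * cnj (complex_of_real (1 / sqrt X) * ee X k x)
        = B x $ b $ a * (complex_of_real (1 / sqrt X) * complex_of_real (1 / sqrt X)) * (ee X j x * cnj (ee X k x))"
      by (simp only: complex_cnj_mult complex_cnj_complex_of_real mult_ac)
    also have "\<dots> = B x $ b $ a * ee X (j - k) x / complex_of_real X"
      unfolding cc eek by simp
    finally show ?thesis .
  qed
  show ?thesis
    unfolding l2_inner_def FC_def integral_divide_zero[symmetric] pt ..
qed

lemma K_entry_formula:
  assumes X: "X > 0"
  shows "K_entry X A0 A1 lam j a k b =
     deriv_inv_symbol X k * (FC X (\<lambda>x. A1 x $ b $ a) (j - k) / complex_of_real X)
   + inv_symbol X k * (FC X (\<lambda>x. A0 x $ b $ a + (if b = a then 1 - lam else 0)) (j - k) / complex_of_real X)"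
  unfolding K_entry_def multiplier_coeff_def inner_formula[OF X]
  by (simp add: mat_def)


lemma per_L2_L2c: "per_L2 X f \<Longrightarrow> L2c X f"
  by (simp add: per_L2_def L2c_def)

lemma normsq_add_le: "(cmod (u + v))\<^sup>2 \<le> 2 * (cmod u)\<^sup>2 + 2 * (cmod v)\<^sup>2"
proof -
  have "(cmod (u + v))\<^sup>2 \<le> (cmod u + cmod v)\<^sup>2"
    by (intro power_mono norm_triangle_ineq) simp
  also have "\<dots> \<le> 2 * (cmod u)\<^sup>2 + 2 * (cmod v)\<^sup>2"
  proof -
    have "0 \<le> (cmod u - cmod v)\<^sup>2" by simp
    then show ?thesis by (simp add: power2_eq_square algebra_simps)
  qed
  finally show ?thesis .
qed

lemma L2c_add_const:
  assumes "L2c X f" shows "L2c X (\<lambda>x. f x + c)"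
proof -
  interpret finite_measure "lebesgue_on {0..X}" by (rule fin_meas)
  have fm: "f \<in> borel_measurable (lebesgue_on {0..X})" using assms by (simp add: L2c_def)
  have m: "(\<lambda>x. f x + c) \<in> borel_measurable (lebesgue_on {0..X})"
    using fm by simp
  have "integrable (lebesgue_on {0..X}) (\<lambda>x. 2 * (cmod (f x))\<^sup>2 + 2 * (cmod c)\<^sup>2)"
    using assms unfolding L2c_def by (intro Bochner_Integration.integrable_add Bochner_Integration.integrable_mult_right) auto
  then have "integrable (lebesgue_on {0..X}) (\<lambda>x. (cmod (f x + c))\<^sup>2)"
  proof (rule Bochner_Integration.integrable_bound)
    show "(\<lambda>x. (cmod (f x + c))\<^sup>2) \<in> borel_measurable (lebesgue_on {0..X})"
      using m by simp
    show "AE x in lebesgue_on {0..X}. norm ((cmod (f x + c))\<^sup>2) \<le> norm (2 * (cmod (f x))\<^sup>2 + 2 * (cmod c)\<^sup>2)"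
      using normsq_add_le by auto
  qed
  then show ?thesis using m by (simp add: L2c_def)
qed

lemma summable_on_sum_fin:
  fixes f :: "'i \<Rightarrow> 'a \<Rightarrow> real"
  assumes "finite I" "\<And>i. i \<in> I \<Longrightarrow> f i summable_on A"
  shows "(\<lambda>x. \<Sum>i\<in>I. f i x) summable_on A"
  using assms
proof (induction I rule: finite_induct)
  case empty then show ?case by simp
next
  case (insert i I)
  then show ?case by (simp add: summable_on_add)
qed


lemma ww_nonneg: "0 \<le> ww X k"
proof -
  have "0 < 1 + (2 * pi * real_of_int k / X)\<^sup>2" by (simp add: add_pos_nonneg)
  then show ?thesis unfolding ww_def by simp
qed

theorem lemma3p1:
  fixes X :: real
    and A0 A1 :: "real \<Rightarrow> complex^'n::finite^'n"
    and lam :: complex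
  assumes "X > 0"
    and "\<forall>i j. per_L2 X (\<lambda>x. A0 x $ i $ j)"
    and "\<forall>i j. per_L2 X (\<lambda>x. A1 x $ i $ j)"
  shows "(\<lambda>((j, a), (k, b)). (cmod (K_entry X A0 A1 lam j a k b))\<^sup>2)
           summable_on (UNIV :: ((int \<times> 'n) \<times> (int \<times> 'n)) set)"
proof -
  have X: "X > 0" using assms(1) .
  define \<phi>1 where "\<phi>1 b a l = (cmod (FC X (\<lambda>x. A1 x $ b $ a) l))\<^sup>2" for b a :: 'n and l
  define \<phi>0 where "\<phi>0 b a l = (cmod (FC X (\<lambda>x. A0 x $ b $ a + (if b = a then 1 - lam else 0)) l))\<^sup>2"
    for b a :: 'n and l
  define \<Phi> where "\<Phi> l = (\<Sum>b'\<in>UNIV. \<Sum>a'\<in>UNIV. \<phi>1 b' a' l + \<phi>0 b' a' l)" for l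
  have n1: "0 \<le> \<phi>1 b a l" for b a l by (simp add: \<phi>1_def)
  have n0: "0 \<le> \<phi>0 b a l" for b a l by (simp add: \<phi>0_def)
  have nP: "0 \<le> \<Phi> l" for l unfolding \<Phi>_def by (intro sum_nonneg add_nonneg_nonneg n1 n0)
  have s1: "\<phi>1 b a summable_on UNIV" for b a
  proof -
    have "L2c X (\<lambda>x. A1 x $ b $ a)" using assms(3) per_L2_L2c by blast
    from bessel_summable[OF X this] show ?thesis by (simp add: \<phi>1_def[abs_def])
  qed
  have s0: "\<phi>0 b a summable_on UNIV" for b a
  proof -
    have "L2c X (\<lambda>x. A0 x $ b $ a)" using assms(2) per_L2_L2c by blast
    from bessel_summable[OF X L2c_add_const[OF this]] show ?thesis by (simp add: \<phi>0_def[abs_def])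
  qed
  have sP: "\<Phi> summable_on UNIV"
    unfolding \<Phi>_def[abs_def]
    by (intro summable_on_sum_fin summable_on_add s1 s0) auto
  have bound: "(cmod (K_entry X A0 A1 lam j a k b))\<^sup>2 \<le> 2 / X\<^sup>2 * (ww X k * \<Phi> (j - k))" for j a k b
  proof -
    define d where "d = deriv_inv_symbol X k"
    define s where "s = inv_symbol X k"
    define F1 where "F1 = FC X (\<lambda>x. A1 x $ b $ a) (j - k)"
    define F0 where "F0 = FC X (\<lambda>x. A0 x $ b $ a + (if b = a then 1 - lam else 0)) (j - k)"
    have e1: "(cmod (d * (F1 / complex_of_real X)))\<^sup>2 = (cmod d)\<^sup>2 * \<phi>1 b a (j - k) / X\<^sup>2"
      using X by (simp add: \<phi>1_def F1_def norm_mult norm_divide power_mult_distrib power_divide)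
    have e0: "(cmod (s * (F0 / complex_of_real X)))\<^sup>2 = (cmod s)\<^sup>2 * \<phi>0 b a (j - k) / X\<^sup>2"
      using X by (simp add: \<phi>0_def F0_def norm_mult norm_divide power_mult_distrib power_divide)
    have K: "K_entry X A0 A1 lam j a k b = d * (F1 / complex_of_real X) + s * (F0 / complex_of_real X)"
      unfolding K_entry_formula[OF X] d_def s_def F1_def F0_def ..
    have A: "(cmod d)\<^sup>2 * \<phi>1 b a (j - k) \<le> ww X k * \<phi>1 b a (j - k)"
      unfolding d_def by (rule mult_right_mono[OF deriv_symbol_bound n1])
    have B: "(cmod s)\<^sup>2 * \<phi>0 b a (j - k) \<le> ww X k * \<phi>0 b a (j - k)"
      unfolding s_def by (rule mult_right_mono[OF inv_symbol_bound n0])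
    have C: "\<phi>1 b a (j - k) + \<phi>0 b a (j - k) \<le> \<Phi> (j - k)"
    proof -
      have "\<phi>1 b a (j - k) + \<phi>0 b a (j - k) \<le> (\<Sum>a'\<in>UNIV. \<phi>1 b a' (j - k) + \<phi>0 b a' (j - k))"
        by (rule member_le_sum) (auto intro: add_nonneg_nonneg n1 n0)
      also have "\<dots> \<le> \<Phi> (j - k)"
        unfolding \<Phi>_def
        by (rule member_le_sum[where f = "\<lambda>b'. \<Sum>a'\<in>UNIV. \<phi>1 b' a' (j - k) + \<phi>0 b' a' (j - k)"])
           (auto intro!: sum_nonneg add_nonneg_nonneg n1 n0)
      finally show ?thesis .
    qed
    have X2: "0 < X\<^sup>2" using X by simp
    have "(cmod (K_entry X A0 A1 lam j a k b))\<^sup>2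
        \<le> 2 * ((cmod d)\<^sup>2 * \<phi>1 b a (j - k) / X\<^sup>2) + 2 * ((cmod s)\<^sup>2 * \<phi>0 b a (j - k) / X\<^sup>2)"
      using normsq_add_le[of "d * (F1 / complex_of_real X)" "s * (F0 / complex_of_real X)"]
      unfolding K e1 e0 .
    also have "\<dots> = 2 / X\<^sup>2 * ((cmod d)\<^sup>2 * \<phi>1 b a (j - k) + (cmod s)\<^sup>2 * \<phi>0 b a (j - k))"
      by (simp add: field_simps add_divide_distrib)
    also have "\<dots> \<le> 2 / X\<^sup>2 * (ww X k * \<phi>1 b a (j - k) + ww X k * \<phi>0 b a (j - k))"
      using A B X2 by (intro mult_left_mono add_mono) auto
    also have "\<dots> \<le> 2 / X\<^sup>2 * (ww X k * \<Phi> (j - k))"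
      using C X2 ww_nonneg[of X k]
      by (intro mult_left_mono) (auto simp flip: distrib_left intro: mult_left_mono)
    finally show ?thesis .
  qed
  define P :: "int \<times> int \<Rightarrow> real" where "P = (\<lambda>(j, k). ww X k * \<Phi> (j - k))"
  have sPP: "P summable_on UNIV"
  proof -
    have W: "(ww X has_sum infsum (ww X) UNIV) UNIV"
      using ww_summable[OF X] summable_iff_has_sum_infsum by blast
    have "(\<lambda>(l, k). ww X k * \<Phi> l) summable_on (Sigma (UNIV :: int set) (\<lambda>_. UNIV :: int set))"
    proof (rule summable_on_SigmaI[where g = "\<lambda>l. infsum (ww X) UNIV * \<Phi> l"])
      show "((\<lambda>k. (\<lambda>(l, k). ww X k * \<Phi> l) (l, k)) has_sum infsum (ww X) UNIV * \<Phi> l) UNIV" for l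
        using has_sum_cmult_left[OF W, of "\<Phi> l"] by simp
      show "(\<lambda>l. infsum (ww X) UNIV * \<Phi> l) summable_on UNIV"
        by (rule summable_on_cmult_right[OF sP])
      show "0 \<le> (\<lambda>(l, k). ww X k * \<Phi> l) (l, k)" for l k
        using ww_nonneg nP by simp
    qed
    then have s: "(\<lambda>(l, k). ww X k * \<Phi> l) summable_on (UNIV :: (int \<times> int) set)" by simp
    have bij: "bij_betw (\<lambda>(l, k). (l + k, k)) (UNIV :: (int \<times> int) set) UNIV"
      by (rule bij_betw_byWitness[where f' = "\<lambda>(j, k). (j - k, k)"]) auto
    have eq: "(\<lambda>x. P ((\<lambda>(l, k). (l + k, k)) x)) = (\<lambda>(l, k). ww X k * \<Phi> l)"
      by (auto simp: P_def fun_eq_iff)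
    show ?thesis using summable_on_reindex_bij_betw[OF bij, of P] s unfolding eq by blast
  qed
  define G :: "(int \<times> 'n) \<times> (int \<times> 'n) \<Rightarrow> real" where "G = (\<lambda>((j, a), (k, b)). P (j, k))"
  have sG: "G summable_on UNIV"
  proof -
    define h :: "(int \<times> int) \<times> ('n \<times> 'n) \<Rightarrow> (int \<times> 'n) \<times> (int \<times> 'n)"
      where "h = (\<lambda>((j, k), (a, b)). ((j, a), (k, b)))"
    have bij: "bij_betw h UNIV UNIV"
      by (rule bij_betw_byWitness[where f' = "\<lambda>((j, a), (k, b)). ((j, k), (a, b))"]) (auto simp: h_def)
    have "(\<lambda>(x, y). P x) summable_on (Sigma (UNIV :: (int \<times> int) set) (\<lambda>_. UNIV :: ('n \<times> 'n) set))"
    proof (rule summable_on_SigmaI[where g = "\<lambda>x. real CARD('n \<times> 'n) * P x"])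
      show "((\<lambda>y. (\<lambda>(x, y). P x) (x, y)) has_sum real CARD('n \<times> 'n) * P x) (UNIV :: ('n \<times> 'n) set)" for x
        by (rule has_sum_finiteI) auto
      show "(\<lambda>x. real CARD('n \<times> 'n) * P x) summable_on UNIV"
        by (rule summable_on_cmult_right[OF sPP])
      show "0 \<le> (\<lambda>(x, y). P x) (x, y)" for x y
        using ww_nonneg nP by (auto simp: P_def split: prod.splits)
    qed
    then have s: "(\<lambda>(x, y). P x) summable_on (UNIV :: ((int \<times> int) \<times> ('n \<times> 'n)) set)" by simp
    have eq: "(\<lambda>z. G (h z)) = (\<lambda>(x, y). P x)"
      by (auto simp: G_def h_def fun_eq_iff)
    show ?thesis using summable_on_reindex_bij_betw[OF bij, of G] s unfolding eq by blast
  qed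
  have sG2: "(\<lambda>x. 2 / X\<^sup>2 * G x) summable_on UNIV"
    by (rule summable_on_cmult_right[OF sG])
  show ?thesis
  proof (rule summable_on_comparison_test[OF sG2])
    fix x :: "(int \<times> 'n) \<times> (int \<times> 'n)"
    obtain j a k b where x: "x = ((j, a), (k, b))" by (metis prod.exhaust)
    show "(\<lambda>((j, a), (k, b)). (cmod (K_entry X A0 A1 lam j a k b))\<^sup>2) x \<le> 2 / X\<^sup>2 * G x"
      using bound[of j a k b] by (simp add: x G_def P_def)
    show "0 \<le> (\<lambda>((j, a), (k, b)). (cmod (K_entry X A0 A1 lam j a k b))\<^sup>2) x"
      by (simp add: x)
  qed
qed

end
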